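(* Let $n\ge2$, $m\ge1$, $\lambda_0\ne0$, $\lambda_1>0$, $\lambda_2\ge0$, $\omega\in\mathbb{R}$, let $f=\frac1n\sum_{i=1}^n r_i(\cdot;\lambda_0,\lambda_1,\lambda_2,m,\omega)$, and assume $f$ attains its minimum $f^*$ on $\mathbb{R}^m$. Consider a PIFO algorithm with initial point $x_0=0$ and sampling probabilities satisfying $p_1\le p_2\le\dots\le p_n$, run on the components $f_i=r_i(\cdot;\lambda_0,\lambda_1,\lambda_2,m,\omega)$. Let $\varepsilon>0$ and let $M\ge1$ be an integer such that $\min_{x\in\mathcal{F}_M}f(x)-f^*\ge9\varepsilon$, and set $N=n(M+1)/4$. Then $\mathbb{E} f(x_t)-f^*\ge\varepsilon$ for every integer $0\le t\le N$.
   Context: For $\omega\in\mathbb{R}$, $B(m,\omega)\in\mathbb{R}^{m\times m}$ is the matrix whose row $l$, for $1\le l\le m-1$, has entry $-1$ in column $m-l$ and entry $1$ in column $m-l+1$, and whose row $m$ is $\omega e_1^\top$; $b_l(m,\omega)^\top$ is its $l$-th row. $\mathcal{L}_i=\{l:1\le l\le m,\ l\equiv i-1\pmod n\}$. $r_1(x)=\lambda_1\sum_{l\in\mathcal{L}_1}(b_l(m,\omega)^\top x)^2+\lambda_2\|x\|_2^2-\lambda_0\langle e_m,x\rangle$ and $r_i(x)=\lambda_1\sum_{l\in\mathcal{L}_i}(b_l(m,\omega)^\top x)^2+\lambda_2\|x\|_2^2$ for $i\ge2$, $x\in\mathbb{R}^m$. $\mathcal{F}_0=\{0\}$, $\mathcal{F}_k=\mathrm{span}\{e_m,\dots,e_{m-k+1}\}$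 for $1\le k\le m$. For $\gamma>0$, $\mathrm{prox}^{\gamma}_g(x)=\arg\min_u\{g(u)+\frac{1}{2\gamma}\|x-u\|_2^2\}$. PIFO algorithm: a probability vector $(p_1,\dots,p_n)$, initial point $x_0$, parameters $\gamma_t>0$; indices $i_1,i_2,\dots$ drawn independently with $\mathbb{P}(i_t=j)=p_j$; iterates $x_t\in\mathrm{span}\{x_0,\dots,x_{t-1},\nabla f_{i_1}(x_0),\dots,\nabla f_{i_t}(x_{t-1}),\mathrm{prox}^{\gamma_1}_{f_{i_1}}(x_0),\dots,\mathrm{prox}^{\gamma_t}_{f_{i_t}}(x_{t-1})\}$ for $t\ge1$. *)

theory Defs
  imports "HOL-Analysis.Analysis"
begin

text \<open>Vectors of R^m are elements of real^'m with m = CARD('m); the coordinate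
  labelled k (1 <= k <= m) is ix k, for a bijection ix from {1..m} onto the index type.\<close>

definition evec :: "(nat \<Rightarrow> 'm::finite) \<Rightarrow> nat \<Rightarrow> real^'m" where
  "evec ix k = axis (ix k) 1"

definition brow :: "(nat \<Rightarrow> 'm::finite) \<Rightarrow> real \<Rightarrow> nat \<Rightarrow> real^'m" where
  "brow ix \<omega> l =
     (if l < CARD('m) then evec ix (CARD('m) - l + 1) - evec ix (CARD('m) - l)
      else \<omega> *\<^sub>R evec ix 1)"

definition Lset :: "nat \<Rightarrow> nat \<Rightarrow> nat \<Rightarrow> nat set" where
  "Lset m n i = {l. 1 \<le> l \<and> l \<le> m \<and> l mod n = (i - 1) mod n}"

definition rfun :: "(nat \<Rightarrow> 'm::finite) \<Rightarrow> nat \<Rightarrow> real \<Rightarrow> real \<Rightarrow> real \<Rightarrow> real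
                    \<Rightarrow> nat \<Rightarrow> real^'m \<Rightarrow> real" where
  "rfun ix n la0 la1 la2 \<omega> i x =
     la1 * (\<Sum>l\<in>Lset CARD('m) n i. (brow ix \<omega> l \<bullet> x)^2) + la2 * (norm x)^2
     - (if i = 1 then la0 * (evec ix CARD('m) \<bullet> x) else 0)"

definition Fsp :: "(nat \<Rightarrow> 'm::finite) \<Rightarrow> nat \<Rightarrow> (real^'m) set" where
  "Fsp ix k = span (evec ix ` {CARD('m) - k + 1 .. CARD('m)})"

definition grad :: "(real^'m \<Rightarrow> real) \<Rightarrow> real^'m \<Rightarrow> real^'m" where
  "grad g x = (THE D. GDERIV g x :> D)"

definition prox :: "real \<Rightarrow> (real^'m \<Rightarrow> real) \<Rightarrow> real^'m \<Rightarrow> real^'m" where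
  "prox \<gamma> g x = (THE u. \<forall>v. g u + (1 / (2 * \<gamma>)) * (norm (x - u))^2
                             \<le> g v + (1 / (2 * \<gamma>)) * (norm (x - v))^2)"

text \<open>A PIFO algorithm with initial point 0: the iterate after the sampled indices
  s = [i_1,...,i_t] is x s; it only depends on the indices sampled so far.\<close>
definition PIFO :: "(nat \<Rightarrow> real^'m \<Rightarrow> real) \<Rightarrow> nat \<Rightarrow> (nat \<Rightarrow> real)
                    \<Rightarrow> (nat list \<Rightarrow> real^'m) \<Rightarrow> bool" where
  "PIFO fc n \<gamma> x \<longleftrightarrow> x [] = 0 \<and> (\<forall>t\<ge>1. \<gamma> t > 0) \<and>
     (\<forall>s. s \<noteq> [] \<and> set s \<subseteq> {1..n} \<longrightarrow>
        x s \<in> span ((\<lambda>k. x (take k s)) ` {..<length s}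
                    \<union> (\<lambda>k. grad (fc (s ! k)) (x (take k s))) ` {..<length s}
                    \<union> (\<lambda>k. prox (\<gamma> (Suc k)) (fc (s ! k)) (x (take k s))) ` {..<length s}))"

text \<open>Expectation of g(x_t) when i_1,...,i_t are i.i.d. with P(i=j) = p j.\<close>
definition expect_iter :: "nat \<Rightarrow> (nat \<Rightarrow> real) \<Rightarrow> (nat list \<Rightarrow> 'a) \<Rightarrow> ('a \<Rightarrow> real) \<Rightarrow> nat \<Rightarrow> real" where
  "expect_iter n p x g t = (\<Sum>s\<in>{s. length s = t \<and> set s \<subseteq> {1..n}}. prod_list (map p s) * g (x s))"

end

theory Submission
  imports Defs
begin


definition Z :: "(nat \<Rightarrow> 'm::finite) \<Rightarrow> nat \<Rightarrow> (real^'m) set" where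
  "Z ix k = {y. \<forall>j. 1 \<le> j \<and> j + k \<le> CARD('m) \<longrightarrow> y $ ix j = 0}"

lemma subspace_Z: "subspace (Z ix k)"
  unfolding subspace_def Z_def by auto

lemma Z_mono: "k \<le> k' \<Longrightarrow> Z ix k \<subseteq> Z ix k'"
  unfolding Z_def by auto

lemma zero_Z: "0 \<in> Z ix k"
  unfolding Z_def by auto

lemma ix_eq:
  assumes ix: "bij_betw ix {1..CARD('m)} (UNIV::'m::finite set)"
    and "j \<in> {1..CARD('m)}" "j' \<in> {1..CARD('m)}"
  shows "ix j = ix j' \<longleftrightarrow> j = j'"
  using assms unfolding bij_betw_def inj_on_def by blast

lemma axis_inner1: "axis i 1 \<bullet> y = y $ i"
  by (simp add: inner_commute inner_axis)

lemma Z_Fsp: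
  assumes ix: "bij_betw ix {1..CARD('m)} (UNIV::'m::finite set)"
  shows "Z ix k \<subseteq> Fsp ix k"
proof
  fix y :: "real^'m" assume y: "y \<in> Z ix k"
  have "y = (\<Sum>c\<in>UNIV. (y$c) *\<^sub>R axis c 1)"
    using basis_expansion[of y] by (simp add: scalar_mult_eq_scaleR)
  also have "\<dots> = (\<Sum>j\<in>{1..CARD('m)}. (y $ ix j) *\<^sub>R evec ix j)"
    unfolding evec_def by (rule sum.reindex_bij_betw[OF ix, symmetric])
  also have "\<dots> \<in> Fsp ix k"
    unfolding Fsp_def
  proof (rule span_sum)
    fix j assume j: "j \<in> {1..CARD('m)}"
    show "(y $ ix j) *\<^sub>R evec ix j \<in> span (evec ix ` {CARD('m) - k + 1..CARD('m)})"
    proof (cases "j + k \<le> CARD('m)")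
      case True
      then have "y $ ix j = 0" using y j unfolding Z_def by auto
      then show ?thesis by (simp add: span_zero)
    next
      case False
      then have "j \<in> {CARD('m) - k + 1..CARD('m)}" using j by auto
      then show ?thesis by (intro span_mul span_base) auto
    qed
  qed
  finally show "y \<in> Fsp ix k" .
qed

lemma brow_inner:
  assumes "1 \<le> l" "l \<le> CARD('m::finite)"
  shows "brow ix \<omega> l \<bullet> (y::real^'m) =
    (if l < CARD('m) then y $ ix (CARD('m) - l + 1) - y $ ix (CARD('m) - l) else \<omega> * y $ ix 1)"
  unfolding brow_def evec_def by (simp add: inner_diff_left axis_inner1)

lemma brow_comp:
  assumes ix: "bij_betw ix {1..CARD('m)} (UNIV::'m::finite set)"
    and "1 \<le> l" "l \<le> CARD('m::finite)" "j \<in> {1..CARD('m)}"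
  shows "brow ix \<omega> l $ ix j =
    (if l < CARD('m) then (if j = CARD('m) - l + 1 then 1 else 0) - (if j = CARD('m) - l then 1 else 0)
     else \<omega> * (if j = 1 then 1 else 0))"
  using assms unfolding brow_def evec_def axis_def
  by (auto simp: ix_eq[OF ix])

definition nxt :: "nat \<Rightarrow> nat \<Rightarrow> nat \<Rightarrow> nat" where
  "nxt n k i = (if i - 1 = k mod n then Suc k else k)"

lemma nxt_ge: "k \<le> nxt n k i" unfolding nxt_def by auto
lemma nxt_le: "nxt n k i \<le> Suc k" unfolding nxt_def by auto

lemma row_ne:
  assumes n: "2 \<le> n" and i: "1 \<le> i" "i \<le> n" and l: "l \<in> Lset m n i"
  shows "l \<noteq> nxt n k i"
proof -
  have lm: "l mod n = i - 1" using l i unfolding Lset_def by auto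
  show ?thesis
  proof (cases "i - 1 = k mod n")
    case True
    have "Suc k mod n \<noteq> k mod n"
      using n by (simp add: mod_Suc)
    then show ?thesis using True lm unfolding nxt_def by auto
  next
    case False
    then show ?thesis using lm unfolding nxt_def by auto
  qed
qed

lemma nxt_one: "1 \<le> nxt n k 1"
  unfolding nxt_def by (cases k) auto



definition Gr :: "(nat \<Rightarrow> 'm::finite) \<Rightarrow> nat \<Rightarrow> real \<Rightarrow> real \<Rightarrow> real \<Rightarrow> real
                    \<Rightarrow> nat \<Rightarrow> real^'m \<Rightarrow> real^'m" where
 "Gr ix n la0 la1 la2 \<omega> i y = (2*la1) *\<^sub>R (\<Sum>l\<in>Lset CARD('m) n i. (brow ix \<omega> l \<bullet> y) *\<^sub>R brow ix \<omega> l)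
     + (2*la2) *\<^sub>R y - (if i = 1 then la0 else 0) *\<^sub>R evec ix CARD('m)"

lemma rfun_alt: fixes ix :: "nat \<Rightarrow> 'm::finite" shows "rfun ix n la0 la1 la2 \<omega> i y =
   la1 * (\<Sum>l\<in>Lset CARD('m) n i. (brow ix \<omega> l \<bullet> y)^2) + la2 * (y \<bullet> y)
     - (if i = 1 then la0 else 0) * (evec ix CARD('m) \<bullet> y)"
  unfolding rfun_def by (simp add: power2_norm_eq_inner)

lemma rfun_deriv: fixes ix :: "nat \<Rightarrow> 'm::finite" shows "GDERIV (rfun ix n la0 la1 la2 \<omega> i) y :> Gr ix n la0 la1 la2 \<omega> i y"
proof -
  have A: "((\<lambda>y. la1 * (\<Sum>l\<in>Lset CARD('m) n i. (brow ix \<omega> l \<bullet> y)^2) + la2 * (y \<bullet> y)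
     - (if i = 1 then la0 else 0) * (evec ix CARD('m) \<bullet> y)) has_derivative
     (\<lambda>h. la1 * (\<Sum>l\<in>Lset CARD('m) n i. 2 * (brow ix \<omega> l \<bullet> y) * (brow ix \<omega> l \<bullet> h)) + la2 * (2 * (y \<bullet> h))
     - (if i = 1 then la0 else 0) * (evec ix CARD('m) \<bullet> h))) (at y)"
    by (auto intro!: derivative_eq_intros simp: algebra_simps inner_commute)
  moreover have B: "(\<lambda>h. la1 * (\<Sum>l\<in>Lset CARD('m) n i. 2 * (brow ix \<omega> l \<bullet> y) * (brow ix \<omega> l \<bullet> h)) + la2 * (2 * (y \<bullet> h))
     - (if i = 1 then la0 else 0) * (evec ix CARD('m) \<bullet> h)) = (\<lambda>h. h \<bullet> Gr ix n la0 la1 la2 \<omega> i y)"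
    unfolding Gr_def
    by (auto simp: inner_diff_right inner_add_right inner_sum_right sum_distrib_left algebra_simps inner_commute intro!: ext sum.cong)
  have e: "rfun ix n la0 la1 la2 \<omega> i = (\<lambda>y. la1 * (\<Sum>l\<in>Lset CARD('m) n i. (brow ix \<omega> l \<bullet> y)^2) + la2 * (y \<bullet> y)
     - (if i = 1 then la0 else 0) * (evec ix CARD('m) \<bullet> y))"
    by (rule ext) (rule rfun_alt)
  show ?thesis unfolding gderiv_def e using A unfolding B .
qed


lemma grad_eq: fixes ix :: "nat \<Rightarrow> 'm::finite"
  shows "grad (rfun ix n la0 la1 la2 \<omega> i) y = Gr ix n la0 la1 la2 \<omega> i y"
  unfolding grad_def
proof (rule the_equality)
  show "GDERIV (rfun ix n la0 la1 la2 \<omega> i) y :> Gr ix n la0 la1 la2 \<omega> i y" by (rule rfun_deriv)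
  fix D assume "GDERIV (rfun ix n la0 la1 la2 \<omega> i) y :> D"
  then have "(\<lambda>h. h \<bullet> D) = (\<lambda>h. h \<bullet> Gr ix n la0 la1 la2 \<omega> i y)"
    using rfun_deriv unfolding gderiv_def by (metis has_derivative_unique)
  then have "(D - Gr ix n la0 la1 la2 \<omega> i y) \<bullet> D = (D - Gr ix n la0 la1 la2 \<omega> i y) \<bullet> Gr ix n la0 la1 la2 \<omega> i y"
    by metis
  then have "(D - Gr ix n la0 la1 la2 \<omega> i y) \<bullet> (D - Gr ix n la0 la1 la2 \<omega> i y) = 0"
    by (simp add: inner_diff_right)
  then show "D = Gr ix n la0 la1 la2 \<omega> i y" by simp
qed

lemma summand_zero:
  fixes ix :: "nat \<Rightarrow> 'm::finite" and y :: "real^'m"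
  assumes ix: "bij_betw ix {1..CARD('m)} UNIV"
    and l: "1 \<le> l" "l \<le> CARD('m)" "l \<noteq> k'" and kk: "k \<le> k'"
    and j: "1 \<le> j" "j + k' \<le> CARD('m)"
    and y: "\<forall>j'. 1 \<le> j' \<and> j' + k \<le> CARD('m) \<longrightarrow> y $ ix j' = 0"
  shows "(brow ix \<omega> l \<bullet> y) * (brow ix \<omega> l $ ix j) = 0"
proof -
  have jr: "j \<in> {1..CARD('m)}" using j by auto
  show ?thesis
  proof (cases "l < CARD('m)")
    case lt: True
    show ?thesis
    proof (cases "j = CARD('m) - l + 1 \<or> j = CARD('m) - l")
      case jj: True
      then have "k < l" using j l kk by auto
      then have a1: "1 \<le> CARD('m) - l + 1 \<and> CARD('m) - l + 1 + k \<le> CARD('m)"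
        and a2: "1 \<le> CARD('m) - l \<and> CARD('m) - l + k \<le> CARD('m)" using lt by auto
      have "y $ ix (CARD('m) - l + 1) = 0" "y $ ix (CARD('m) - l) = 0"
        using y a1 a2 by blast+
      then show ?thesis using brow_inner[OF l(1,2)] lt by simp
    next
      case False
      then show ?thesis using brow_comp[OF ix l(1,2) jr] lt by simp
    qed
  next
    case ge: False
    show ?thesis
    proof (cases "j = 1")
      case True
      then have "y $ ix 1 = 0" using y j kk by auto
      then show ?thesis using brow_inner[OF l(1,2)] ge by simp
    next
      case F2: False
      then show ?thesis using brow_comp[OF ix l(1,2) jr] ge by simp
    qed
  qed
qed

lemma Gr_Z:
  fixes ix :: "nat \<Rightarrow> 'm::finite" and y :: "real^'m"
  assumes ix: "bij_betw ix {1..CARD('m)} UNIV"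
    and n: "2 \<le> n" and i: "1 \<le> i" "i \<le> n" and y: "y \<in> Z ix k"
  shows "Gr ix n la0 la1 la2 \<omega> i y \<in> Z ix (nxt n k i)"
  unfolding Z_def
proof (intro CollectI allI impI)
  fix j assume j: "1 \<le> j \<and> j + nxt n k i \<le> CARD('m)"
  have jr: "j \<in> {1..CARD('m)}" using j by auto
  have yz: "\<forall>j'. 1 \<le> j' \<and> j' + k \<le> CARD('m) \<longrightarrow> y $ ix j' = 0" using y unfolding Z_def by auto
  have kk: "k \<le> nxt n k i" by (rule nxt_ge)
  have s: "(\<Sum>l\<in>Lset CARD('m) n i. (brow ix \<omega> l \<bullet> y) * (brow ix \<omega> l $ ix j)) = 0"
  proof (rule sum.neutral, rule ballI)
    fix l assume l: "l \<in> Lset CARD('m) n i"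
    have "l \<noteq> nxt n k i" using row_ne[OF n i l] .
    moreover have "1 \<le> l" "l \<le> CARD('m)" using l unfolding Lset_def by auto
    ultimately show "(brow ix \<omega> l \<bullet> y) * (brow ix \<omega> l $ ix j) = 0"
      using summand_zero[OF ix _ _ _ kk _ _ yz] j by blast
  qed
  have y0: "y $ ix j = 0" using yz j kk by auto
  have e0: "(if i = 1 then la0 else 0) * (evec ix CARD('m) $ ix j) = 0"
  proof (cases "i = 1")
    case True
    then have "1 \<le> nxt n k i" using nxt_one by simp
    then have "j \<noteq> CARD('m)" using j by auto
    then have "ix j \<noteq> ix CARD('m)" using ix_eq[OF ix jr, of "CARD('m)"] by auto
    then show ?thesis unfolding evec_def axis_def by simp
  qed simp
  show "Gr ix n la0 la1 la2 \<omega> i y $ ix j = 0"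
    unfolding Gr_def using s y0 e0 by (simp add: sum_component sum_distrib_left)
qed


lemma sq_mid: "((a + b) / 2)^2 \<le> (a^2 + b^2) / (2::real)"
proof -
  have "0 \<le> (a - b)^2" by simp
  then show ?thesis by (simp add: power2_eq_square field_simps) 
qed

lemma inner_mid: fixes u v :: "'a::real_inner"
  shows "((1/2) *\<^sub>R (u + v)) \<bullet> ((1/2) *\<^sub>R (u + v)) \<le> (u \<bullet> u + v \<bullet> v) / 2"
proof -
  have "0 \<le> (u - v) \<bullet> (u - v)" by simp
  then have "2 * (u \<bullet> v) \<le> u \<bullet> u + v \<bullet> v" by (simp add: inner_diff_left inner_diff_right inner_commute)
  then show ?thesis by (simp add: inner_add_left inner_add_right inner_commute)
qed

lemma rfun_mid:
  fixes ix :: "nat \<Rightarrow> 'm::finite" and u v :: "real^'m"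
  assumes l1: "0 \<le> la1" and l2: "0 \<le> la2"
  shows "rfun ix n la0 la1 la2 \<omega> i ((1/2) *\<^sub>R (u + v)) \<le>
     (rfun ix n la0 la1 la2 \<omega> i u + rfun ix n la0 la1 la2 \<omega> i v) / 2"
proof -
  let ?L = "Lset CARD('m) n i"
  let ?c = "(if i = 1 then la0 else 0)"
  let ?e = "evec ix CARD('m)"
  let ?w = "(1/2) *\<^sub>R (u + v)"
  have A: "(\<Sum>l\<in>?L. (brow ix \<omega> l \<bullet> ?w)^2) \<le> ((\<Sum>l\<in>?L. (brow ix \<omega> l \<bullet> u)^2) + (\<Sum>l\<in>?L. (brow ix \<omega> l \<bullet> v)^2)) / 2"
  proof -
    have "(\<Sum>l\<in>?L. (brow ix \<omega> l \<bullet> ?w)^2) \<le> (\<Sum>l\<in>?L. ((brow ix \<omega> l \<bullet> u)^2 + (brow ix \<omega> l \<bullet> v)^2) / 2)"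
    proof (rule sum_mono)
      fix l
      have "brow ix \<omega> l \<bullet> ?w = (brow ix \<omega> l \<bullet> u + brow ix \<omega> l \<bullet> v) / 2"
        by (simp add: inner_add_right)
      then show "(brow ix \<omega> l \<bullet> ?w)^2 \<le> ((brow ix \<omega> l \<bullet> u)^2 + (brow ix \<omega> l \<bullet> v)^2) / 2"
        using sq_mid by simp
    qed
    also have "\<dots> = ((\<Sum>l\<in>?L. (brow ix \<omega> l \<bullet> u)^2) + (\<Sum>l\<in>?L. (brow ix \<omega> l \<bullet> v)^2)) / 2"
      by (simp only: sum_divide_distrib[symmetric] sum.distrib)
    finally show ?thesis .
  qed
  have B: "?w \<bullet> ?w \<le> (u \<bullet> u + v \<bullet> v) / 2" by (rule inner_mid)
  have C: "?e \<bullet> ?w = (?e \<bullet> u + ?e \<bullet> v) / 2" by (simp add: inner_add_right)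
  have A': "la1 * (\<Sum>l\<in>?L. (brow ix \<omega> l \<bullet> ?w)^2) \<le> la1 * (((\<Sum>l\<in>?L. (brow ix \<omega> l \<bullet> u)^2) + (\<Sum>l\<in>?L. (brow ix \<omega> l \<bullet> v)^2)) / 2)"
    using A l1 by (rule mult_left_mono)
  have B': "la2 * (?w \<bullet> ?w) \<le> la2 * ((u \<bullet> u + v \<bullet> v) / 2)"
    using B l2 by (rule mult_left_mono)
  have C': "?c * (?e \<bullet> ?w) = (?c * (?e \<bullet> u) + ?c * (?e \<bullet> v)) / 2"
    unfolding C by (simp add: algebra_simps)
  have A'': "la1 * (\<Sum>l\<in>?L. (brow ix \<omega> l \<bullet> ?w)^2) \<le> (la1 * (\<Sum>l\<in>?L. (brow ix \<omega> l \<bullet> u)^2) + la1 * (\<Sum>l\<in>?L. (brow ix \<omega> l \<bullet> v)^2)) / 2"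
    using A' by (simp add: ring_distribs)
  have B'': "la2 * (?w \<bullet> ?w) \<le> (la2 * (u \<bullet> u) + la2 * (v \<bullet> v)) / 2"
    using B' by (simp add: ring_distribs)
  show ?thesis unfolding rfun_alt using A'' B'' C' by argo
qed

lemma norm_mid: fixes x u v :: "'a::real_inner"
  shows "(norm (x - (1/2) *\<^sub>R (u + v)))^2 = ((norm (x - u))^2 + (norm (x - v))^2) / 2 - (norm (u - v))^2 / 4"
  unfolding power2_norm_eq_inner
  by (simp add: inner_diff_left inner_diff_right inner_add_left inner_add_right inner_commute field_simps)

lemma rfun_zero: "rfun ix n la0 la1 la2 \<omega> i 0 = 0"
  unfolding rfun_def by simp

lemma rfun_lower:
  fixes ix :: "nat \<Rightarrow> 'm::finite" and u :: "real^'m"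
  assumes ix: "bij_betw ix {1..CARD('m)} UNIV" and l1: "0 \<le> la1" and l2: "0 \<le> la2"
  shows "- \<bar>la0\<bar> * norm u \<le> rfun ix n la0 la1 la2 \<omega> i u"
proof -
  have n1: "norm (evec ix CARD('m)) = 1" unfolding evec_def by simp
  have "\<bar>evec ix CARD('m) \<bullet> u\<bar> \<le> norm u"
    using Cauchy_Schwarz_ineq2[of "evec ix CARD('m)" u] n1 by simp
  then have "\<bar>(if i = 1 then la0 else 0) * (evec ix CARD('m) \<bullet> u)\<bar> \<le> \<bar>la0\<bar> * norm u"
    by (auto simp: abs_mult intro: mult_left_mono)
  moreover have "0 \<le> la1 * (\<Sum>l\<in>Lset CARD('m) n i. (brow ix \<omega> l \<bullet> u)^2)"
    using l1 by (simp add: sum_nonneg)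
  moreover have "0 \<le> la2 * (u \<bullet> u)" using l2 by simp
  ultimately show ?thesis unfolding rfun_alt by linarith
qed



lemma rfun_cont: "continuous_on S (rfun ix n la0 la1 la2 \<omega> i)"
proof -
  have e: "rfun ix n la0 la1 la2 \<omega> i = (\<lambda>y. la1 * (\<Sum>l\<in>Lset CARD('m) n i. (brow ix \<omega> l \<bullet> y)^2) + la2 * (y \<bullet> y)
     - (if i = 1 then la0 else 0) * (evec ix CARD('m) \<bullet> y))" for ix :: "nat \<Rightarrow> 'm::finite"
    by (rule ext) (rule rfun_alt)
  show ?thesis unfolding e by (intro continuous_intros)
qed

lemma prox_exists:
  fixes ix :: "nat \<Rightarrow> 'm::finite" and x0 :: "real^'m"
  assumes ix: "bij_betw ix {1..CARD('m)} UNIV" and l1: "0 \<le> la1" and l2: "0 \<le> la2" and a: "0 < a"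
  shows "\<exists>u. \<forall>v. rfun ix n la0 la1 la2 \<omega> i u + a * (norm (x0 - u))^2 \<le> rfun ix n la0 la1 la2 \<omega> i v + a * (norm (x0 - v))^2"
proof -
  define H where "H = (\<lambda>u. rfun ix n la0 la1 la2 \<omega> i u + a * (norm (x0 - u))^2)"
  define R where "R = 2 * norm x0 + \<bar>la0\<bar> / a + 1"
  have "continuous_on (cball 0 R) H" unfolding H_def
    by (intro continuous_intros rfun_cont)
  moreover have Rpos: "0 \<le> R" unfolding R_def using a
    by (intro add_nonneg_nonneg) (auto intro: divide_nonneg_pos)
  then have "cball 0 R \<noteq> {}" by auto
  ultimately obtain u where u: "u \<in> cball 0 R" "\<forall>y\<in>cball 0 R. H u \<le> H y"
    using continuous_attains_inf[of "cball 0 R" H] by auto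
  have R0: "0 \<in> cball 0 R" using Rpos by simp
  have H0: "H 0 = a * (norm x0)^2" unfolding H_def by (simp add: rfun_zero)
  have "H u \<le> H v" for v
  proof (cases "v \<in> cball 0 R")
    case True then show ?thesis using u by auto
  next
    case False
    define r where "r = norm v"
    define X where "X = norm x0"
    define L where "L = \<bar>la0\<bar>"
    have rR: "r > R" using False unfolding r_def by auto
    have X0: "0 \<le> X" "0 \<le> L" unfolding X_def L_def by auto
    have aL: "a * (L / a) = L" using a by simp
    have "a * r > a * R" using rR a by simp
    moreover have "a * R = 2 * a * X + L + a" unfolding R_def X_def L_def using a by (simp add: field_simps)
    ultimately have ar: "a * r > 2 * a * X + L + a" by simp
    have r0: "r > 0" using rR X0 a unfolding R_def X_def by (smt (verit) divide_nonneg_pos)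
    have "r - X \<le> norm (x0 - v)" unfolding r_def X_def by (metis norm_minus_commute norm_triangle_ineq2)
    moreover have "0 \<le> r - X" using rR X0 a unfolding R_def X_def L_def
      by (smt (verit) divide_nonneg_pos)
    ultimately have sq: "(r - X)^2 \<le> (norm (x0 - v))^2" by (simp add: power_mono)
    have low: "- L * r \<le> rfun ix n la0 la1 la2 \<omega> i v" unfolding L_def r_def by (rule rfun_lower[OF ix l1 l2])
    have "r * (a * r - 2 * a * X - L) > 0" using ar r0 a by (simp add: mult_pos_pos)
    then have "a * X^2 < a * (r - X)^2 - L * r" by (simp add: power2_eq_square algebra_simps)
    also have "\<dots> \<le> a * (norm (x0 - v))^2 - L * r" using sq a by simp
    finally have "H 0 < H v" unfolding H0 unfolding H_def X_def using low by linarith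
    then show ?thesis using u R0 by fastforce
  qed
  then show ?thesis unfolding H_def by blast
qed

lemma prox_unique:
  fixes ix :: "nat \<Rightarrow> 'm::finite" and x0 :: "real^'m"
  assumes l1: "0 \<le> la1" and l2: "0 \<le> la2" and a: "0 < a"
    and u: "\<forall>v. rfun ix n la0 la1 la2 \<omega> i u + a * (norm (x0 - u))^2 \<le> rfun ix n la0 la1 la2 \<omega> i v + a * (norm (x0 - v))^2"
    and u': "\<forall>v. rfun ix n la0 la1 la2 \<omega> i u' + a * (norm (x0 - u'))^2 \<le> rfun ix n la0 la1 la2 \<omega> i v + a * (norm (x0 - v))^2"
  shows "u = u'"
proof -
  define w where "w = (1/2) *\<^sub>R (u + u')"
  have A: "rfun ix n la0 la1 la2 \<omega> i w \<le> (rfun ix n la0 la1 la2 \<omega> i u + rfun ix n la0 la1 la2 \<omega> i u') / 2"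
    unfolding w_def by (rule rfun_mid[OF l1 l2])
  have B: "(norm (x0 - w))^2 = ((norm (x0 - u))^2 + (norm (x0 - u'))^2) / 2 - (norm (u - u'))^2 / 4"
    unfolding w_def by (rule norm_mid)
  have C1: "rfun ix n la0 la1 la2 \<omega> i u + a * (norm (x0 - u))^2 \<le> rfun ix n la0 la1 la2 \<omega> i w + a * (norm (x0 - w))^2"
    using u by blast
  have C2: "rfun ix n la0 la1 la2 \<omega> i u' + a * (norm (x0 - u'))^2 \<le> rfun ix n la0 la1 la2 \<omega> i w + a * (norm (x0 - w))^2"
    using u' by blast
  have B': "a * (norm (x0 - w))^2 = (a * (norm (x0 - u))^2 + a * (norm (x0 - u'))^2) / 2 - a * (norm (u - u'))^2 / 4"
    unfolding B by (simp add: algebra_simps)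
  have "a * (norm (u - u'))^2 \<le> 0"
    using A B' C1 C2 by argo
  then have "(norm (u - u'))^2 \<le> 0" using a by (simp add: mult_le_0_iff)
  then show ?thesis by simp
qed



definition Pj :: "(nat \<Rightarrow> 'm::finite) \<Rightarrow> nat \<Rightarrow> real^'m \<Rightarrow> real^'m" where
  "Pj ix k y = (\<chi> c. if (\<exists>j. 1 \<le> j \<and> j + k \<le> CARD('m) \<and> c = ix j) then 0 else y $ c)"

lemma Pj_comp:
  fixes ix :: "nat \<Rightarrow> 'm::finite"
  assumes ix: "bij_betw ix {1..CARD('m)} UNIV" and j: "j \<in> {1..CARD('m)}"
  shows "Pj ix k y $ ix j = (if j + k \<le> CARD('m) then 0 else y $ ix j)"
proof -
  have "(\<exists>j'. 1 \<le> j' \<and> j' + k \<le> CARD('m) \<and> ix j = ix j') \<longleftrightarrow> j + k \<le> CARD('m)"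
  proof
    assume "\<exists>j'. 1 \<le> j' \<and> j' + k \<le> CARD('m) \<and> ix j = ix j'"
    then obtain j' where "1 \<le> j'" "j' + k \<le> CARD('m)" "ix j = ix j'" by blast
    then show "j + k \<le> CARD('m)" using ix_eq[OF ix j, of j'] by auto
  next
    assume "j + k \<le> CARD('m)" then show "\<exists>j'. 1 \<le> j' \<and> j' + k \<le> CARD('m) \<and> ix j = ix j'" using j by auto
  qed
  then show ?thesis unfolding Pj_def by simp
qed

lemma Pj_alt: "Pj ix k y $ c = 0 \<or> Pj ix k y $ c = y $ c"
  unfolding Pj_def by auto

lemma norm_mask:
  fixes z y :: "real^'m::finite"
  assumes "\<And>c. z $ c = 0 \<or> z $ c = y $ c"
  shows "(norm z)^2 \<le> (norm y)^2"
proof -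
  have "(\<Sum>c\<in>UNIV. z $ c * z $ c) \<le> (\<Sum>c\<in>UNIV. y $ c * y $ c)"
  proof (rule sum_mono)
    fix c show "z $ c * z $ c \<le> y $ c * y $ c" using assms[of c] by auto
  qed
  then show ?thesis unfolding power2_norm_eq_inner inner_vec_def by simp
qed

lemma Pj_Z:
  fixes ix :: "nat \<Rightarrow> 'm::finite"
  assumes ix: "bij_betw ix {1..CARD('m)} UNIV"
  shows "Pj ix k y \<in> Z ix k"
  unfolding Z_def using Pj_comp[OF ix] by auto

lemma Pj_rfun:
  fixes ix :: "nat \<Rightarrow> 'm::finite" and y :: "real^'m"
  assumes ix: "bij_betw ix {1..CARD('m)} UNIV"
    and n: "2 \<le> n" and i: "1 \<le> i" "i \<le> n" and l1: "0 \<le> la1" and l2: "0 \<le> la2"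
  shows "rfun ix n la0 la1 la2 \<omega> i (Pj ix (nxt n k i) y) \<le> rfun ix n la0 la1 la2 \<omega> i y"
proof -
  let ?k = "nxt n k i"
  let ?P = "Pj ix ?k y"
  have A: "(\<Sum>l\<in>Lset CARD('m) n i. (brow ix \<omega> l \<bullet> ?P)^2) \<le> (\<Sum>l\<in>Lset CARD('m) n i. (brow ix \<omega> l \<bullet> y)^2)"
  proof (rule sum_mono)
    fix l assume l: "l \<in> Lset CARD('m) n i"
    have lne: "l \<noteq> ?k" using row_ne[OF n i l] .
    have l12: "1 \<le> l" "l \<le> CARD('m)" using l unfolding Lset_def by auto
    have "brow ix \<omega> l \<bullet> ?P = 0 \<or> brow ix \<omega> l \<bullet> ?P = brow ix \<omega> l \<bullet> y"
    proof (cases "l < CARD('m)")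
      case True
      have r1: "CARD('m) - l + 1 \<in> {1..CARD('m)}" "CARD('m) - l \<in> {1..CARD('m)}" using True l12 by auto
      show ?thesis
      proof (cases "?k < l")
        case True
        then show ?thesis unfolding brow_inner[OF l12] using Pj_comp[OF ix r1(1)] Pj_comp[OF ix r1(2)] \<open>l < CARD('m)\<close>
          by auto
      next
        case False
        then have "l < ?k" using lne by auto
        then show ?thesis unfolding brow_inner[OF l12] using Pj_comp[OF ix r1(1)] Pj_comp[OF ix r1(2)] \<open>l < CARD('m)\<close>
          by auto
      qed
    next
      case False
      have "(1::nat) \<in> {1..CARD('m)}" by simp
      then show ?thesis unfolding brow_inner[OF l12] using Pj_comp[OF ix, of 1] False by auto
    qed
    then show "(brow ix \<omega> l \<bullet> ?P)^2 \<le> (brow ix \<omega> l \<bullet> y)^2" by auto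
  qed
  have B: "?P \<bullet> ?P \<le> y \<bullet> y" using norm_mask[of ?P y] Pj_alt[of ix ?k y] unfolding power2_norm_eq_inner by blast
  have C: "(if i = 1 then la0 else 0) * (evec ix CARD('m) \<bullet> ?P) = (if i = 1 then la0 else 0) * (evec ix CARD('m) \<bullet> y)"
  proof (cases "i = 1")
    case True
    then have "1 \<le> ?k" using nxt_one by simp
    moreover have "CARD('m) \<in> {1..CARD('m)}" by simp
    ultimately have "?P $ ix CARD('m) = y $ ix CARD('m)" using Pj_comp[OF ix] by simp
    then show ?thesis unfolding evec_def by (simp add: axis_inner1)
  qed simp
  have A': "la1 * (\<Sum>l\<in>Lset CARD('m) n i. (brow ix \<omega> l \<bullet> ?P)^2) \<le> la1 * (\<Sum>l\<in>Lset CARD('m) n i. (brow ix \<omega> l \<bullet> y)^2)"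
    using A l1 by (rule mult_left_mono)
  have B': "la2 * (?P \<bullet> ?P) \<le> la2 * (y \<bullet> y)" using B l2 by (rule mult_left_mono)
  show ?thesis unfolding rfun_alt using A' B' C by argo
qed

lemma prox_Z:
  fixes ix :: "nat \<Rightarrow> 'm::finite" and y :: "real^'m"
  assumes ix: "bij_betw ix {1..CARD('m)} UNIV"
    and n: "2 \<le> n" and i: "1 \<le> i" "i \<le> n" and l1: "0 \<le> la1" and l2: "0 \<le> la2"
    and g: "0 < \<gamma>" and y: "y \<in> Z ix k"
  shows "prox \<gamma> (rfun ix n la0 la1 la2 \<omega> i) y \<in> Z ix (nxt n k i)"
proof -
  let ?k = "nxt n k i"
  let ?r = "rfun ix n la0 la1 la2 \<omega> i"
  define a where "a = 1 / (2 * \<gamma>)"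
  have a: "0 < a" unfolding a_def using g by simp
  let ?Q = "\<lambda>u. \<forall>v. ?r u + a * (norm (y - u))^2 \<le> ?r v + a * (norm (y - v))^2"
  obtain u where u: "?Q u" using prox_exists[OF ix l1 l2 a] by blast
  have uniq: "\<And>u'. ?Q u' \<Longrightarrow> u' = u" using prox_unique[OF l1 l2 a] u by blast
  have pe: "prox \<gamma> ?r y = u" unfolding prox_def a_def[symmetric]
    using u uniq by (rule the_equality)
  have yk: "y \<in> Z ix ?k" using y Z_mono[OF nxt_ge] by blast
  have "(norm (y - Pj ix ?k u))^2 \<le> (norm (y - u))^2"
  proof (rule norm_mask)
    fix c
    have "c \<in> ix ` {1..CARD('m)}" using ix unfolding bij_betw_def by simp
    then obtain j where j: "j \<in> {1..CARD('m)}" "c = ix j" by blast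
    show "(y - Pj ix ?k u) $ c = 0 \<or> (y - Pj ix ?k u) $ c = (y - u) $ c"
      using Pj_comp[OF ix j(1)] yk j unfolding Z_def by auto
  qed
  moreover have "?r (Pj ix ?k u) \<le> ?r u" by (rule Pj_rfun[OF ix n i l1 l2])
  ultimately have "?r (Pj ix ?k u) + a * (norm (y - Pj ix ?k u))^2 \<le> ?r u + a * (norm (y - u))^2"
    using a by (smt (verit) mult_left_mono)
  then have "?Q (Pj ix ?k u)" using u by (meson order_trans)
  then have "Pj ix ?k u = u" by (rule uniq)
  then show ?thesis using pe Pj_Z[OF ix, of ?k u] by simp
qed



definition Kf :: "nat \<Rightarrow> nat list \<Rightarrow> nat" where
  "Kf n s = foldl (nxt n) 0 s"

lemma foldl_nxt_ge: "a \<le> foldl (nxt n) a xs"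
  by (induction xs arbitrary: a) (auto intro: le_trans[OF nxt_ge])

lemma Kf_snoc: "Kf n (s @ [i]) = nxt n (Kf n s) i"
  unfolding Kf_def by simp

lemma Kf_take: "Kf n (take k s) \<le> Kf n s"
proof -
  have "Kf n s = foldl (nxt n) (Kf n (take k s)) (drop k s)"
    unfolding Kf_def by (metis append_take_drop_id foldl_append)
  then show ?thesis using foldl_nxt_ge by metis
qed

lemma iter_Z:
  fixes ix :: "nat \<Rightarrow> 'm::finite" and x :: "nat list \<Rightarrow> real^'m"
  assumes ix: "bij_betw ix {1..CARD('m)} UNIV"
    and n: "2 \<le> n" and l1: "0 \<le> la1" and l2: "0 \<le> la2"
    and alg: "PIFO (rfun ix n la0 la1 la2 \<omega>) n \<gamma> x"
  shows "set s \<subseteq> {1..n} \<Longrightarrow> x s \<in> Z ix (Kf n s)"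
proof (induction s rule: length_induct)
  case (1 s)
  note IH = 1(1)[rule_format]
  show ?case
  proof (cases "s = []")
    case True
    then show ?thesis using alg zero_Z unfolding PIFO_def by simp
  next
    case False
    let ?F = "rfun ix n la0 la1 la2 \<omega>"
    have sp: "x s \<in> span ((\<lambda>k. x (take k s)) ` {..<length s}
                    \<union> (\<lambda>k. grad (?F (s ! k)) (x (take k s))) ` {..<length s}
                    \<union> (\<lambda>k. prox (\<gamma> (Suc k)) (?F (s ! k)) (x (take k s))) ` {..<length s})"
      using alg False 1(2) unfolding PIFO_def by blast
    have gam: "\<And>k. 0 < \<gamma> (Suc k)" using alg unfolding PIFO_def by auto
    have sub: "((\<lambda>k. x (take k s)) ` {..<length s}
                    \<union> (\<lambda>k. grad (?F (s ! k)) (x (take k s))) ` {..<length s}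
                    \<union> (\<lambda>k. prox (\<gamma> (Suc k)) (?F (s ! k)) (x (take k s))) ` {..<length s}) \<subseteq> Z ix (Kf n s)"
    proof -
      {
        fix k assume k: "k < length s"
        have st: "set (take k s) \<subseteq> {1..n}" using 1(2) by (meson order_trans set_take_subset)
        have xk: "x (take k s) \<in> Z ix (Kf n (take k s))" using IH[of "take k s"] k st by simp
        have sk: "1 \<le> s ! k" "s ! k \<le> n" using 1(2) k nth_mem by fastforce+
        have ts: "take (Suc k) s = take k s @ [s ! k]" using k by (simp add: take_Suc_conv_app_nth)
        have kk: "Kf n (take (Suc k) s) \<le> Kf n s" by (rule Kf_take)
        have nx: "nxt n (Kf n (take k s)) (s ! k) \<le> Kf n s" using kk unfolding ts Kf_snoc .
        have "x (take k s) \<in> Z ix (Kf n s)" using xk Z_mono[OF Kf_take] by blast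
        moreover have "grad (?F (s ! k)) (x (take k s)) \<in> Z ix (Kf n s)"
          unfolding grad_eq using Gr_Z[OF ix n sk xk] Z_mono[OF nx] by blast
        moreover have "prox (\<gamma> (Suc k)) (?F (s ! k)) (x (take k s)) \<in> Z ix (Kf n s)"
          using prox_Z[OF ix n sk l1 l2 gam xk] Z_mono[OF nx] by blast
        ultimately have "x (take k s) \<in> Z ix (Kf n s) \<and> grad (?F (s ! k)) (x (take k s)) \<in> Z ix (Kf n s)
           \<and> prox (\<gamma> (Suc k)) (?F (s ! k)) (x (take k s)) \<in> Z ix (Kf n s)" by blast
      }
      then show ?thesis by auto
    qed
    show ?thesis using sp span_minimal[OF sub subspace_Z] by blast
  qed
qed



definition Sq :: "nat \<Rightarrow> nat \<Rightarrow> nat list set" where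
  "Sq n t = {s. length s = t \<and> set s \<subseteq> {1..n}}"

lemma Sq_finite: "finite (Sq n t)"
proof -
  have "Sq n t = {xs. set xs \<subseteq> {1..n} \<and> length xs = t}" unfolding Sq_def by auto
  then show ?thesis using finite_lists_length_eq[of "{1..n}" t] by simp
qed

lemma Sq_Suc: "Sq n (Suc t) = (\<lambda>(s, i). s @ [i]) ` (Sq n t \<times> {1..n})"
proof
  show "Sq n (Suc t) \<subseteq> (\<lambda>(s, i). s @ [i]) ` (Sq n t \<times> {1..n})"
  proof
    fix s assume s: "s \<in> Sq n (Suc t)"
    then have ne: "s \<noteq> []" unfolding Sq_def by auto
    then have e: "s = butlast s @ [last s]" by simp
    have "set (butlast s) \<subseteq> {1..n}" "length (butlast s) = t"
      using s ne unfolding Sq_def by (auto dest: in_set_butlastD)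
    moreover have "last s \<in> {1..n}" using s last_in_set[OF ne] unfolding Sq_def by blast
    ultimately
    show "s \<in> (\<lambda>(s, i). s @ [i]) ` (Sq n t \<times> {1..n})"
      unfolding Sq_def using e by (auto intro!: image_eqI[of _ _ "(butlast s, last s)"])
  qed
next
  show "(\<lambda>(s, i). s @ [i]) ` (Sq n t \<times> {1..n}) \<subseteq> Sq n (Suc t)"
    unfolding Sq_def by auto
qed

lemma Sq_sum_Suc: "(\<Sum>s\<in>Sq n (Suc t). g s) = (\<Sum>s\<in>Sq n t. \<Sum>i\<in>{1..n}. g (s @ [i]))"
proof -
  have inj: "inj_on (\<lambda>(s, i). s @ [i]) (Sq n t \<times> {1..n})"
    by (auto simp: inj_on_def)
  have "(\<Sum>s\<in>Sq n (Suc t). g s) = (\<Sum>z\<in>Sq n t \<times> {1..n}. g ((\<lambda>(s, i). s @ [i]) z))"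
    unfolding Sq_Suc by (subst sum.reindex[OF inj]) (simp add: comp_def)
  also have "\<dots> = (\<Sum>s\<in>Sq n t. \<Sum>i\<in>{1..n}. g (s @ [i]))"
    using sum.cartesian_product[of "\<lambda>s i. g (s @ [i])" "{1..n}" "Sq n t"] by (simp add: split_def)
  finally show ?thesis .
qed

definition pr :: "(nat \<Rightarrow> real) \<Rightarrow> nat list \<Rightarrow> real" where
  "pr p s = prod_list (map p s)"

lemma pr_snoc: "pr p (s @ [i]) = pr p s * p i"
  unfolding pr_def by simp

lemma pr_nonneg: assumes "\<forall>j\<in>{1..n}. p j \<ge> 0" "s \<in> Sq n t" shows "0 \<le> pr p s"
  using assms unfolding pr_def Sq_def by (force intro!: prod_list_nonneg)

lemma pr_sum: assumes "(\<Sum>j=1..n. p j) = 1" shows "(\<Sum>s\<in>Sq n t. pr p s) = 1"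
proof (induction t)
  case 0
  have "Sq n 0 = {[]}" unfolding Sq_def by auto
  then show ?case unfolding pr_def by simp
next
  case (Suc t)
  have "(\<Sum>s\<in>Sq n (Suc t). pr p s) = (\<Sum>s\<in>Sq n t. \<Sum>i\<in>{1..n}. pr p s * p i)"
    unfolding Sq_sum_Suc pr_snoc ..
  also have "\<dots> = (\<Sum>s\<in>Sq n t. pr p s)" using assms by (simp add: sum_distrib_left[symmetric])
  finally show ?case using Suc by simp
qed



definition wt :: "nat \<Rightarrow> real \<Rightarrow> real" where
  "wt n q = (if 0 < q then 1 / q else 2 * real n)"

definition phi :: "nat \<Rightarrow> (nat \<Rightarrow> real) \<Rightarrow> nat \<Rightarrow> nat \<Rightarrow> real" where
  "phi n p M k = (\<Sum>j<min k M. wt n (p (j mod n + 1)))"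

lemma wt_mul: "0 \<le> q \<Longrightarrow> q * wt n q \<le> 1"
  unfolding wt_def by auto

lemma wt_nonneg: "0 \<le> wt n q"
  unfolding wt_def by auto

lemma phi_nonneg: "0 \<le> phi n p M k"
  unfolding phi_def by (auto intro!: sum_nonneg wt_nonneg)

lemma phi_Suc: "phi n p M (Suc k) - phi n p M k = (if k < M then wt n (p (k mod n + 1)) else 0)"
proof (cases "k < M")
  case True
  then have "min (Suc k) M = Suc k" "min k M = k" by auto
  then show ?thesis unfolding phi_def using True by simp
next
  case False
  then have "min (Suc k) M = M" "min k M = M" by auto
  then show ?thesis unfolding phi_def using False by simp
qed

lemma phi_step:
  assumes n: "1 \<le> n" and pn: "\<forall>j\<in>{1..n}. p j \<ge> 0" and ps: "(\<Sum>j=1..n. p j) = 1"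
  shows "(\<Sum>i\<in>{1..n}. p i * phi n p M (nxt n k i)) \<le> phi n p M k + 1"
proof -
  define i0 where "i0 = k mod n + 1"
  have i0: "i0 \<in> {1..n}" unfolding i0_def using n
    by (simp add: Suc_leI)
  define d where "d = phi n p M (Suc k) - phi n p M k"
  have "(\<Sum>i\<in>{1..n}. p i * phi n p M (nxt n k i)) =
        (\<Sum>i\<in>{1..n}. p i * phi n p M k + (if i = i0 then p i * d else 0))"
  proof (rule sum.cong)
    fix i assume i: "i \<in> {1..n}"
    have "nxt n k i = (if i = i0 then Suc k else k)" unfolding nxt_def i0_def using i by auto
    then show "p i * phi n p M (nxt n k i) = p i * phi n p M k + (if i = i0 then p i * d else 0)"
      unfolding d_def by (auto simp: algebra_simps)
  qed simp
  also have "\<dots> = phi n p M k + p i0 * d"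
    using i0 ps by (simp add: sum.distrib sum_distrib_right[symmetric] mult.commute)
  also have "p i0 * d \<le> 1"
  proof -
    have "0 \<le> p i0" using pn i0 by auto
    then show ?thesis unfolding d_def phi_Suc i0_def[symmetric] using wt_mul by auto
  qed
  finally show ?thesis by simp
qed

lemma expect_phi:
  assumes n: "1 \<le> n" and pn: "\<forall>j\<in>{1..n}. p j \<ge> 0" and ps: "(\<Sum>j=1..n. p j) = 1"
  shows "(\<Sum>s\<in>Sq n t. pr p s * phi n p M (Kf n s)) \<le> real t"
proof (induction t)
  case 0
  have "Sq n 0 = {[]}" unfolding Sq_def by auto
  then show ?case unfolding phi_def Kf_def by simp
next
  case (Suc t)
  have "(\<Sum>s\<in>Sq n (Suc t). pr p s * phi n p M (Kf n s))
     = (\<Sum>s\<in>Sq n t. pr p s * (\<Sum>i\<in>{1..n}. p i * phi n p M (nxt n (Kf n s) i)))"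
    unfolding Sq_sum_Suc pr_snoc Kf_snoc by (simp add: sum_distrib_left mult.assoc)
  also have "\<dots> \<le> (\<Sum>s\<in>Sq n t. pr p s * (phi n p M (Kf n s) + 1))"
  proof (rule sum_mono)
    fix s assume "s \<in> Sq n t"
    then have "0 \<le> pr p s" using pr_nonneg pn by blast
    then show "pr p s * (\<Sum>i\<in>{1..n}. p i * phi n p M (nxt n (Kf n s) i)) \<le> pr p s * (phi n p M (Kf n s) + 1)"
      using phi_step[OF n pn ps] by (rule mult_left_mono[rotated])
  qed
  also have "\<dots> = (\<Sum>s\<in>Sq n t. pr p s * phi n p M (Kf n s)) + (\<Sum>s\<in>Sq n t. pr p s)"
    by (simp add: algebra_simps sum.distrib)
  also have "\<dots> \<le> real t + 1" using Suc pr_sum[OF ps] by simp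
  finally show ?case by simp
qed



lemma p_mono_gen:
  assumes pm: "\<forall>j. 1 \<le> j \<and> j < n \<longrightarrow> p j \<le> p (Suc j)" and j: "1 \<le> j" "j \<le> j'" "j' \<le> n"
  shows "p j \<le> (p j' :: real)"
  using j(2,3)
proof (induction j' rule: dec_induct)
  case base then show ?case by simp
next
  case (step m)
  then have "p m \<le> p (Suc m)" using pm j(1) by auto
  then show ?case using step by simp
qed

lemma sorted_avg:
  assumes pm: "\<forall>j. 1 \<le> j \<and> j < n \<longrightarrow> p j \<le> p (Suc j)" and b: "b \<le> n"
  shows "real n * (\<Sum>j=1..b. p j) \<le> real b * (\<Sum>j=1..n. (p j :: real))"
proof (cases "b = 0")
  case True then show ?thesis by simp
next
  case False
  define c where "c = p b"
  define A where "A = (\<Sum>j=1..b. p j)"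
  define R where "R = (\<Sum>j=Suc b..n. p j)"
  have "(\<Sum>j=1..n. p j) = (\<Sum>j=1..b+(n-b). p j)" using b by simp
  also have "\<dots> = (\<Sum>j=1..b. p j) + (\<Sum>j=b+1..b+(n-b). p j)"
    by (rule sum.ub_add_nat) simp
  finally have tot: "(\<Sum>j=1..n. p j) = A + R" unfolding A_def R_def using b by simp
  have A: "A \<le> real b * c" unfolding A_def c_def
    using sum_bounded_above[of "{1..b}" p "p b"] p_mono_gen[OF pm] b by auto
  have R: "real (n - b) * c \<le> R" unfolding R_def c_def
    using sum_bounded_below[of "{Suc b..n}" "p b" p] p_mono_gen[OF pm] b False by auto
  have nb: "real n = real (n - b) + real b" using b by simp
  have "real n * A = real (n - b) * A + real b * A" unfolding nb by (simp add: algebra_simps)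
  also have "real (n - b) * A \<le> real (n - b) * (real b * c)" using A by (simp add: mult_left_mono)
  also have "real (n - b) * (real b * c) = real b * (real (n - b) * c)" by simp
  also have "\<dots> \<le> real b * R" using R by (simp add: mult_left_mono)
  finally have "real n * A \<le> real b * R + real b * A" by simp
  then show ?thesis unfolding tot A_def[symmetric] by (simp add: algebra_simps)
qed

lemma sum_split_nat: "(\<Sum>j<a + (b::nat). f j) = (\<Sum>j<a. f j) + (\<Sum>j<b. f (a + j)) "
  by (induction b) (auto simp: add.assoc)

lemma cyc:
  assumes n: "1 \<le> n" and pm: "\<forall>j. 1 \<le> j \<and> j < n \<longrightarrow> p j \<le> p (Suc j)" and ps: "(\<Sum>j=1..n. p j) = 1"
  shows "real n * (\<Sum>j<M. p (j mod n + 1)) \<le> real M"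
proof (induction M rule: less_induct)
  case (less M)
  show ?case
  proof (cases "M < n")
    case True
    have "(\<Sum>j<M. p (j mod n + 1)) = (\<Sum>j<M. p (Suc j))" using True by (intro sum.cong) auto
    also have "\<dots> = (\<Sum>j=1..M. p j)"
      by (metis One_nat_def sum.atLeast1_atMost_eq)
    finally show ?thesis using sorted_avg[OF pm, of M] True ps by simp
  next
    case False
    then obtain M' where M': "M = n + M'" by (metis le_add_diff_inverse not_less)
    have a: "(\<Sum>j<n. p (j mod n + 1)) = 1"
    proof -
      have "(\<Sum>j<n. p (j mod n + 1)) = (\<Sum>j<n. p (Suc j))" by (intro sum.cong) auto
      also have "\<dots> = (\<Sum>j=1..n. p j)" by (metis One_nat_def sum.atLeast1_atMost_eq)
      finally show ?thesis using ps by simp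
    qed
    have b: "(\<Sum>j<M'. p ((n + j) mod n + 1)) = (\<Sum>j<M'. p (j mod n + 1))" by simp
    have "M' < M" using M' n by simp
    then have IH: "real n * (\<Sum>j<M'. p (j mod n + 1)) \<le> real M'" by (rule less)
    have "real n * (\<Sum>j<M. p (j mod n + 1)) = real n * 1 + real n * (\<Sum>j<M'. p (j mod n + 1))"
      unfolding M' sum_split_nat a b by (simp add: algebra_simps)
    then show ?thesis using IH M' by simp
  qed
qed

lemma wt_lower: assumes "0 \<le> q" shows "2 * real n - (real n)^2 * q \<le> wt n q"
proof (cases "0 < q")
  case True
  have "0 \<le> (real n * q - 1)^2" by simp
  then have "(2 * real n - (real n)^2 * q) * q \<le> 1" by (simp add: power2_eq_square algebra_simps)
  then show ?thesis unfolding wt_def using True by (simp add: field_simps)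
next
  case False then show ?thesis unfolding wt_def using assms by simp
qed

lemma phiM:
  assumes n: "1 \<le> n" and pn: "\<forall>j\<in>{1..n}. p j \<ge> 0" and pm: "\<forall>j. 1 \<le> j \<and> j < n \<longrightarrow> p j \<le> p (Suc j)"
    and ps: "(\<Sum>j=1..n. p j) = 1"
  shows "real n * real M \<le> phi n p M M"
proof -
  have q0: "0 \<le> p (j mod n + 1)" for j
  proof -
    have "j mod n < n" using n by simp
    then have "j mod n + 1 \<in> {1..n}" by simp
    then show ?thesis using pn by blast
  qed
  have "(\<Sum>j<M. 2 * real n - (real n)^2 * p (j mod n + 1)) \<le> phi n p M M"
    unfolding phi_def min.idem by (intro sum_mono wt_lower q0)
  moreover have "(\<Sum>j<M. 2 * real n - (real n)^2 * p (j mod n + 1)) = 2 * real n * real M - real n * (real n * (\<Sum>j<M. p (j mod n + 1)))"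
    by (simp add: sum_subtractf sum_distrib_left power2_eq_square algebra_simps)
  moreover have "real n * (real n * (\<Sum>j<M. p (j mod n + 1))) \<le> real n * real M"
    using cyc[OF n pm ps, of M] by (simp add: mult_left_mono)
  ultimately show ?thesis by linarith
qed



theorem lemma2p5:
  fixes ix :: "nat \<Rightarrow> 'm::finite"
    and n M :: nat and la0 la1 la2 \<omega> \<epsilon> fstar :: real
    and p \<gamma> :: "nat \<Rightarrow> real" and x :: "nat list \<Rightarrow> real^'m"
  defines "f \<equiv> (\<lambda>y. (1 / real n) * (\<Sum>i=1..n. rfun ix n la0 la1 la2 \<omega> i y))"
  assumes ix: "bij_betw ix {1..CARD('m)} UNIV"
    and n: "n \<ge> 2" and l0: "la0 \<noteq> 0" and l1: "la1 > 0" and l2: "la2 \<ge> 0"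
    and fmin: "\<exists>xs. f xs = fstar \<and> (\<forall>y. fstar \<le> f y)"
    and p_nonneg: "\<forall>j\<in>{1..n}. p j \<ge> 0" and p_sum: "(\<Sum>j=1..n. p j) = 1"
    and p_mono: "\<forall>j. 1 \<le> j \<and> j < n \<longrightarrow> p j \<le> p (Suc j)"
    and alg: "PIFO (rfun ix n la0 la1 la2 \<omega>) n \<gamma> x"
    and eps: "\<epsilon> > 0"
    and M: "1 \<le> M" "M \<le> CARD('m)"
    and gap: "(INF y\<in>Fsp ix M. f y) - fstar \<ge> 9 * \<epsilon>"
  shows "\<forall>t::nat. real t \<le> real n * (real M + 1) / 4 \<longrightarrow>
           expect_iter n p x f t - fstar \<ge> \<epsilon>"
proof (intro allI impI)
  fix t :: nat assume t: "real t \<le> real n * (real M + 1) / 4"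
  have n1: "1 \<le> n" using n by simp
  have l1': "0 \<le> la1" using l1 by simp
  have flow: "\<And>y. fstar \<le> f y" using fmin by blast
  define I where "I = (\<lambda>s. if M \<le> Kf n s then 1 else (0::real))"
  define Pb where "Pb = (\<Sum>s\<in>Sq n t. pr p s * I s)"
  have E: "expect_iter n p x f t = (\<Sum>s\<in>Sq n t. pr p s * f (x s))"
    unfolding expect_iter_def Sq_def pr_def ..
  have bdd: "bdd_below (f ` Fsp ix M)" by (rule bdd_belowI[of _ fstar]) (use flow in auto)
  have pt: "9 * \<epsilon> * (1 - I s) \<le> f (x s) - fstar" if s: "s \<in> Sq n t" for s
  proof (cases "M \<le> Kf n s")
    case True then show ?thesis unfolding I_def using flow[of "x s"] by simp
  next
    case False
    have "x s \<in> Z ix (Kf n s)" using iter_Z[OF ix n l1' l2 alg] s unfolding Sq_def by blast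
    then have "x s \<in> Fsp ix M" using Z_mono[of "Kf n s" M ix] Z_Fsp[OF ix, of M] False by auto
    then have "(INF y\<in>Fsp ix M. f y) \<le> f (x s)" using bdd by (rule cINF_lower[rotated])
    then show ?thesis unfolding I_def using False gap by simp
  qed
  have pnn: "\<And>s. s \<in> Sq n t \<Longrightarrow> 0 \<le> pr p s" using pr_nonneg p_nonneg by blast
  have "(\<Sum>s\<in>Sq n t. pr p s * (9 * \<epsilon> * (1 - I s))) \<le> (\<Sum>s\<in>Sq n t. pr p s * (f (x s) - fstar))"
    by (intro sum_mono mult_left_mono pt pnn)
  moreover have "(\<Sum>s\<in>Sq n t. pr p s * (9 * \<epsilon> * (1 - I s))) = 9 * \<epsilon> * ((\<Sum>s\<in>Sq n t. pr p s) - Pb)"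
    unfolding Pb_def sum_subtractf[symmetric] sum_distrib_left by (rule sum.cong) (simp_all add: algebra_simps)
  then have "(\<Sum>s\<in>Sq n t. pr p s * (9 * \<epsilon> * (1 - I s))) = 9 * \<epsilon> * (1 - Pb)"
    using pr_sum[OF p_sum, of t] by simp
  moreover have "(\<Sum>s\<in>Sq n t. pr p s * (f (x s) - fstar)) = expect_iter n p x f t - fstar"
    unfolding E using pr_sum[OF p_sum, of t]
    by (simp add: algebra_simps sum_subtractf sum_distrib_left[symmetric])
  ultimately have main: "9 * \<epsilon> * (1 - Pb) \<le> expect_iter n p x f t - fstar" by simp
  have Pb0: "0 \<le> Pb" unfolding Pb_def I_def by (auto intro!: sum_nonneg pnn)
  have "Pb * phi n p M M = (\<Sum>s\<in>Sq n t. pr p s * (I s * phi n p M M))"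
    unfolding Pb_def sum_distrib_right by (simp add: algebra_simps)
  also have "\<dots> \<le> (\<Sum>s\<in>Sq n t. pr p s * phi n p M (Kf n s))"
  proof (intro sum_mono mult_left_mono pnn)
    fix s
    show "I s * phi n p M M \<le> phi n p M (Kf n s)"
    proof (cases "M \<le> Kf n s")
      case True
      then have "min (Kf n s) M = M" by simp
      then show ?thesis unfolding I_def phi_def using True by simp
    next
      case False then show ?thesis unfolding I_def using phi_nonneg by simp
    qed
  qed
  also have "\<dots> \<le> real t" by (rule expect_phi[OF n1 p_nonneg p_sum])
  finally have A: "Pb * phi n p M M \<le> real t" .
  have B: "real n * real M \<le> phi n p M M" by (rule phiM[OF n1 p_nonneg p_mono p_sum])
  have "Pb * (real n * real M) \<le> Pb * phi n p M M" using B Pb0 by (rule mult_left_mono)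
  also have "\<dots> \<le> real n * (real M + 1) / 4" using A t by simp
  also have "\<dots> \<le> real n * real M / 2"
  proof -
    have "real n * 1 \<le> real n * real M" using M(1) by (intro mult_left_mono) auto
    then show ?thesis by (simp add: field_simps)
  qed
  finally have "Pb * (real n * real M) \<le> (1/2) * (real n * real M)" by simp
  moreover have "0 < real n * real M" using n M(1) by simp
  ultimately have "Pb \<le> 1/2" using mult_le_cancel_right_pos by blast
  then have "\<epsilon> \<le> 9 * \<epsilon> * (1 - Pb)" using eps by (simp add: algebra_simps) 
  then show "\<epsilon> \<le> expect_iter n p x f t - fstar" using main by simp
qed


end
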